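(* Let $q=2^m$ with $m$ a positive integer, let $b\in\mathbb{F}_q^*$ and $\delta\in\mathbb{F}_{q^2}\setminus\mathbb{F}_q$, and let $i$ be a non-negative integer. Put $$A=b\,\mathrm{Tr}_{q^2/q}(\delta)^{2^i},\quad B=b\,\mathrm{Tr}_{q^2/q}(\delta)^{2^i}\delta^{2q+2},\quad C=\mathrm{Tr}_{q^2/q}(\delta)^2,\quad D=1/A,$$ and define $S_{-1}=0$, $S_0=1$, $S_k=C^{2^{k-1}}S_{k-1}+D^{2^{k-1}}S_{k-2}$ for $k\geq1$. If the polynomial $$P(x)=b(x^q+x+\delta)^{2q+2^i+2}+x$$ permutes $\mathbb{F}_{q^2}$, then its compositional inverse over $\mathbb{F}_{q^2}$ is $$P^{-1}(x)=x+b\left(\delta+\sum_{k=0}^{m-1}\left(D^{2^k}S_{m-2-k}^{2^{k+1}}+D^{1-2^{k}}S_k\right)\left(x^q+x+B\right)^{2^k}\right)^{2q+2^i+2}.$$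
   Context: $\mathrm{Tr}_{q^2/q}(y)=y+y^q$. The compositional inverse of a permutation polynomial $f$ of $\mathbb{F}_{Q}$ is the unique polynomial $f^{-1}$ (modulo $x^Q-x$) with $f(f^{-1}(c))=f^{-1}(f(c))=c$ for all $c\in\mathbb{F}_Q$. *)

theory Defs
  imports Main "HOL-Library.Cardinality"
begin

definition trace2 :: "nat \<Rightarrow> 'a::field \<Rightarrow> 'a" where
  "trace2 q y = y + y ^ q"

text \<open>Shifted sequence: Sseq C D (j+1) = S_j, so Sseq C D 0 = S_{-1} = 0, Sseq C D 1 = S_0 = 1,
  and S_k = C^(2^(k-1)) S_{k-1} + D^(2^(k-1)) S_{k-2} for k >= 1.\<close>
fun Sseq :: "'a::field \<Rightarrow> 'a \<Rightarrow> nat \<Rightarrow> 'a" where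
  "Sseq C D 0 = 0"
| "Sseq C D (Suc 0) = 1"
| "Sseq C D (Suc (Suc n)) = C ^ (2 ^ n) * Sseq C D (Suc n) + D ^ (2 ^ n) * Sseq C D n"

definition S :: "'a::field \<Rightarrow> 'a \<Rightarrow> int \<Rightarrow> 'a" where
  "S C D j = Sseq C D (nat (j + 1))"

end

theory Submission
  imports Defs "HOL-Computational_Algebra.Polynomial"
begin

lemma c2_add_self: fixes x :: "'a::field" assumes c2: "(1::'a) + 1 = 0" shows "x + x = 0"
proof -
  have "x + x = x * (1 + 1)" by (simp add: algebra_simps)
  thus ?thesis using c2 by simp
qed

lemma c2_minus: fixes x :: "'a::field" assumes c2: "(1::'a) + 1 = 0" shows "- x = x"
  using c2_add_self[OF c2, of x] by (simp add: add_eq_0_iff)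

lemma c2_diff: fixes x :: "'a::field" assumes c2: "(1::'a) + 1 = 0" shows "x - y = x + y"
proof -
  have "x - y = x + (- y)" by (rule diff_conv_add_uminus)
  also have "- y = y" by (rule c2_minus[OF c2])
  finally show ?thesis .
qed

lemma c2_sq_add: fixes x y :: "'a::field" assumes c2: "(1::'a) + 1 = 0"
  shows "(x + y) ^ 2 = x ^ 2 + y ^ 2"
proof -
  have "(x + y) ^ 2 = x^2 + y^2 + (x*y + x*y)" by (simp add: power2_eq_square algebra_simps)
  thus ?thesis using c2_add_self[OF c2, of "x*y"] by simp
qed

lemma c2_pow2_add: fixes x y :: "'a::field" assumes c2: "(1::'a) + 1 = 0"
  shows "(x + y) ^ (2 ^ k) = x ^ (2 ^ k) + y ^ (2 ^ k)"
proof (induction k)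
  case 0 then show ?case by simp
next
  case (Suc k)
  have "(x + y) ^ (2 ^ Suc k) = ((x + y) ^ (2 ^ k)) ^ 2" by (simp add: power_mult[symmetric] mult.commute)
  also have "\<dots> = (x ^ (2 ^ k)) ^ 2 + (y ^ (2 ^ k)) ^ 2" using Suc c2_sq_add[OF c2] by simp
  also have "\<dots> = x ^ (2 ^ Suc k) + y ^ (2 ^ Suc k)" by (simp add: power_mult[symmetric] mult.commute)
  finally show ?case .
qed

lemma c2_pow2_sum: fixes f :: "'b \<Rightarrow> 'a::field" assumes c2: "(1::'a) + 1 = 0"
  shows "(sum f A) ^ (2 ^ k) = (\<Sum>i\<in>A. f i ^ (2 ^ k))"
proof (induction A rule: infinite_finite_induct)
  case (infinite A) then show ?case by simp
next
  case empty then show ?case by simp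
next
  case (insert x F) then show ?case by (simp add: c2_pow2_add[OF c2])
qed

lemma pow2_pow2: fixes x :: "'a::monoid_mult" shows "(x ^ (2 ^ a)) ^ (2 ^ b) = x ^ (2 ^ (a + b))"
  by (simp add: power_mult[symmetric] power_add)

lemma fin_field_pow_card: fixes x :: "'a::{field,finite}" shows "x ^ CARD('a) = x"
proof (cases "x = 0")
  case True then show ?thesis by (simp add: zero_power)
next
  case False
  let ?U = "UNIV - {0::'a}"
  have inj: "inj_on ((*) x) ?U" using False by (auto simp: inj_on_def)
  have img: "(*) x ` ?U = ?U"
  proof
    show "(*) x ` ?U \<subseteq> ?U" using False by auto
    show "?U \<subseteq> (*) x ` ?U"
    proof
      fix y assume "y \<in> ?U"
      then have "y = x * (y / x)" "y / x \<in> ?U" using False by auto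
      then show "y \<in> (*) x ` ?U" by blast
    qed
  qed
  have "prod id ?U = prod id ((*) x ` ?U)" using img by simp
  also have "\<dots> = prod ((*) x) ?U" using prod.reindex[OF inj, of id] by simp
  also have "\<dots> = x ^ card ?U * prod id ?U" by (simp add: prod.distrib)
  finally have "x ^ card ?U * prod id ?U = 1 * prod id ?U" by simp
  moreover have "prod id ?U \<noteq> 0" by (simp add: prod_zero_iff)
  ultimately have "x ^ card ?U = 1" by simp
  moreover have "card ?U + 1 = CARD('a)"
    by (simp add: card_Diff_subset)
  ultimately show ?thesis by (metis power_Suc2 mult_1 Suc_eq_plus1)
qed

definition mm :: "'a::field \<times> 'a \<times> 'a \<times> 'a \<Rightarrow> 'a \<times> 'a \<times> 'a \<times> 'a \<Rightarrow> 'a \<times> 'a \<times> 'a \<times> 'a" where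
  "mm X Y = (case X of (a,b,c,d) \<Rightarrow> case Y of (e,f,g,h) \<Rightarrow>
     (a*e + b*g, a*f + b*h, c*e + d*g, c*f + d*h))"

definition msq :: "'a::field \<times> 'a \<times> 'a \<times> 'a \<Rightarrow> 'a \<times> 'a \<times> 'a \<times> 'a" where
  "msq X = (case X of (a,b,c,d) \<Rightarrow> (a^2, b^2, c^2, d^2))"

definition mdet :: "'a::field \<times> 'a \<times> 'a \<times> 'a \<Rightarrow> 'a" where
  "mdet X = (case X of (a,b,c,d) \<Rightarrow> a*d - b*c)"

definition Mk :: "'a::field \<Rightarrow> 'a \<Rightarrow> nat \<Rightarrow> 'a \<times> 'a \<times> 'a \<times> 'a" where
  "Mk C D k = (C^(2^k), D^(2^k), 1, 0)"

fun Pr :: "'a::field \<Rightarrow> 'a \<Rightarrow> nat \<Rightarrow> nat \<Rightarrow> 'a \<times> 'a \<times> 'a \<times> 'a" where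
  "Pr C D s 0 = (1, 0, 0, 1)"
| "Pr C D s (Suc n) = mm (Mk C D (s + n)) (Pr C D s n)"

lemma mm_assoc: "mm (mm X Y) Z = mm X (mm Y Z)"
  by (cases X; cases Y; cases Z) (simp add: mm_def algebra_simps)

lemma mm_id: "mm X (1,0,0,1) = X" "mm (1,0,0,1) X = X"
  by (cases X; simp add: mm_def)+

lemma mdet_mm: "mdet (mm X Y) = mdet X * mdet Y"
  by (cases X; cases Y) (simp add: mm_def mdet_def algebra_simps)

lemma msq_mm: assumes c2: "(1::'a::field) + 1 = 0"
  shows "msq (mm X Y) = mm (msq X) (msq (Y::'a \<times> 'a \<times> 'a \<times> 'a))"
  by (cases X; cases Y) (simp add: mm_def msq_def c2_sq_add[OF c2] power_mult_distrib)

lemma msq_Mk: "msq (Mk C D k) = Mk C D (Suc k)"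
  by (simp add: msq_def Mk_def power_mult[symmetric] mult.commute)

lemma msq_Pr: assumes c2: "(1::'a::field) + 1 = 0"
  shows "msq (Pr C D s n) = Pr (C::'a) D (Suc s) n"
proof (induction n)
  case 0 then show ?case by (simp add: msq_def)
next
  case (Suc n) then show ?case by (simp only: Pr.simps msq_mm[OF c2] msq_Mk) simp
qed

lemma Pr_Suc': "Pr C D s (Suc n) = mm (Pr C D (Suc s) n) (Mk C D s)"
proof (induction n)
  case 0 then show ?case by (simp add: mm_id)
next
  case (Suc n)
  have "Pr C D s (Suc (Suc n)) = mm (Mk C D (s + Suc n)) (Pr C D s (Suc n))" by simp
  also have "\<dots> = mm (Mk C D (s + Suc n)) (mm (Pr C D (Suc s) n) (Mk C D s))" using Suc by simp
  also have "\<dots> = mm (Pr C D (Suc s) (Suc n)) (Mk C D s)" by (simp add: mm_assoc)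
  finally show ?case .
qed

lemma Pr_closed: assumes c2: "(1::'a::field) + 1 = 0"
  shows "Pr C D 0 (Suc n) = (Sseq C D (Suc (Suc n)), D * Sseq C D (Suc n) ^ 2, Sseq C D (Suc n), D * (Sseq (C::'a) D n) ^ 2)"
proof (induction n)
  case 0 then show ?case by (simp add: mm_def Mk_def)
next
  case (Suc n)
  have r3: "Sseq C D (Suc (Suc (Suc n))) = C^(2^Suc n) * Sseq C D (Suc (Suc n)) + D^(2^Suc n) * Sseq C D (Suc n)"
    by (rule Sseq.simps(3))
  have e: "Sseq C D (Suc (Suc (Suc n))) ^ 2 = C^(2^Suc (Suc n)) * Sseq C D (Suc (Suc n)) ^ 2 + D^(2^Suc (Suc n)) * Sseq C D (Suc n) ^ 2"
    by (simp only: Sseq.simps(3) c2_sq_add[OF c2] power_mult_distrib power_mult[symmetric] mult.commute power_Suc)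
  have e': "Sseq C D (Suc (Suc n)) ^ 2 = C^(2^Suc n) * Sseq C D (Suc n) ^ 2 + D^(2^Suc n) * Sseq C D n ^ 2"
    by (simp only: Sseq.simps(3) c2_sq_add[OF c2] power_mult_distrib power_mult[symmetric] mult.commute power_Suc)
  have "Pr C D 0 (Suc (Suc n)) = mm (Mk C D (Suc n)) (Pr C D 0 (Suc n))" by (simp only: Pr.simps add_0)
  also have "\<dots> = mm (Mk C D (Suc n)) (Sseq C D (Suc (Suc n)), D * Sseq C D (Suc n) ^ 2, Sseq C D (Suc n), D * (Sseq (C::'a) D n) ^ 2)"
    using Suc.IH by simp
  also have "\<dots> = (C^(2^Suc n) * Sseq C D (Suc (Suc n)) + D^(2^Suc n) * Sseq C D (Suc n),
     D * (C^(2^Suc n) * Sseq C D (Suc n) ^ 2 + D^(2^Suc n) * Sseq C D n ^ 2),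
     Sseq C D (Suc (Suc n)), D * Sseq C D (Suc n) ^ 2)"
    by (simp only: mm_def Mk_def prod.case) (simp add: algebra_simps)
  also have "\<dots> = (Sseq C D (Suc (Suc (Suc n))), D * Sseq C D (Suc (Suc n)) ^ 2, Sseq C D (Suc (Suc n)), D * Sseq C D (Suc n) ^ 2)"
    by (simp only: r3 e')
  finally show ?case .
qed

lemma Sseq_dual: assumes c2: "(1::'a::field) + 1 = 0"
  shows "Sseq C D (Suc (Suc n)) = C * Sseq C D (Suc n) ^ 2 + D^2 * (Sseq (C::'a) D n) ^ 4"
proof (cases n)
  case 0 then show ?thesis by simp
next
  case (Suc n')
  have "Pr C D 0 (Suc (Suc n')) = mm (msq (Pr C D 0 (Suc n'))) (Mk C D 0)"
    by (simp only: Pr_Suc'[of C D 0 "Suc n'"] msq_Pr[OF c2])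
  then have "(Sseq C D (Suc (Suc (Suc n'))), D * Sseq C D (Suc (Suc n')) ^ 2, Sseq C D (Suc (Suc n')), D * (Sseq (C::'a) D (Suc n')) ^ 2)
     = mm (msq (Sseq C D (Suc (Suc n')), D * Sseq C D (Suc n') ^ 2, Sseq C D (Suc n'), D * (Sseq (C::'a) D n') ^ 2)) (Mk C D 0)"
    by (simp only: Pr_closed[OF c2])
  then have "Sseq C D (Suc (Suc (Suc n'))) = Sseq C D (Suc (Suc n'))^2 * C + (D * Sseq C D (Suc n') ^ 2)^2"
    by (simp add: mm_def msq_def Mk_def del: Sseq.simps)
  then show ?thesis using Suc by (simp add: power_mult_distrib power_mult[symmetric] algebra_simps del: Sseq.simps)
qed

lemma mdet_Pr: assumes c2: "(1::'a::field) + 1 = 0"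
  shows "mdet (Pr C D 0 n) = (D::'a) ^ (2^n - 1)"
proof (induction n)
  case 0 then show ?case by (simp add: mdet_def)
next
  case (Suc n)
  have "mdet (Pr C D 0 (Suc n)) = mdet (Mk C D n) * D ^ (2^n - 1)" using Suc by (simp add: mdet_mm)
  also have "mdet (Mk C D n) = D^(2^n)" by (simp add: Mk_def mdet_def c2_minus[OF c2])
  also have "D^(2^n) * D ^ (2^n - 1) = D ^ (2^n + (2^n - 1))" by (rule power_add[symmetric])
  also have "2^n + (2^n - 1) = (2::nat)^(Suc n) - 1" by simp
  finally show ?case .
qed

lemma trace_idem: assumes c2: "(1::'a::field) + 1 = 0"
  and Cq: "C ^ (2^m) = C" and Dq: "D ^ (2^m) = D" and Dnz: "D \<noteq> 0" and m: "m \<ge> 1"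
  shows "(Sseq C D (Suc m) + D * Sseq C D (m - 1) ^ 2) ^ 2 = Sseq C D (Suc m) + D * Sseq (C::'a) D (m - 1) ^ 2"
proof -
  obtain y1 y2 y3 y4 where Y: "Pr C D 0 m = (y1,y2,y3,y4)" by (cases "Pr C D 0 m") auto
  have MK: "Mk C D m = Mk C D 0" unfolding Mk_def Cq Dq by simp
  have "mm (Mk C D 0) (Pr C D 0 m) = mm (Mk C D m) (Pr C D 0 m)" by (simp only: MK)
  also have "\<dots> = Pr C D 0 (Suc m)" by simp
  also have "\<dots> = mm (Pr C D (Suc 0) m) (Mk C D 0)" by (rule Pr_Suc')
  also have "\<dots> = mm (msq (Pr C D 0 m)) (Mk C D 0)" by (simp only: msq_Pr[OF c2])
  finally have "mm (Mk C D 0) (Pr C D 0 m) = mm (msq (Pr C D 0 m)) (Mk C D 0)" .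
  then have "(C * y1 + D * y3, C * y2 + D * y4, y1, y2) = (y1^2 * C + y2^2 * 1, y1^2 * D + y2^2 * 0, y3^2 * C + y4^2 * 1, y3^2 * D + y4^2 * 0)"
    unfolding Y by (simp only: mm_def msq_def Mk_def prod.case power_0 power_one_right mult_1 mult_zero_left add_0_right)
  then have hh: "C * y1 + D * y3 = y1^2 * C + y2^2 * 1 \<and> C * y2 + D * y4 = y1^2 * D + y2^2 * 0 \<and> y1 = y3^2 * C + y4^2 * 1
    \<and> y2 = y3^2 * D + y4^2 * 0" by (metis prod.inject)
  then have h2: "C * y2 + D * y4 = y1^2 * D + y2^2 * 0" and h3: "y1 = y3^2 * C + y4^2 * 1"
    and h4: "y2 = y3^2 * D + y4^2 * 0" by blast+
  have eqs: "y1^2 * D = C * y2 + D * y4" "y3^2 * C + y4^2 = y1" "y3^2 * D = y2"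
    using h2 apply simp using h3 apply simp using h4 by simp
  have a1: "D*y1^2 = C*y2 + D*y4" using eqs(1) by (simp add: mult.commute)
  have "y4^2 = y1 - y3^2*C" using eqs(2) by (metis add_diff_cancel_left')
  then have a2: "y4^2 = y1 + y3^2*C" using c2_diff[OF c2] by simp
  have "D*y4^2 = D*y1 + (y3^2*D)*C" unfolding a2 by (simp add: algebra_simps)
  then have a3: "D*y4^2 = D*y1 + y2*C" using eqs(3) by simp
  have "D * (y1^2 + y4^2) = D*y4 + D*y1 + (C*y2 + C*y2)" unfolding distrib_left a1 a3 by (simp add: algebra_simps)
  then have "D * (y1^2 + y4^2) = D * (y1 + y4)" using c2_add_self[OF c2, of "C*y2"] by (simp add: algebra_simps)
  then have "(y1 + y4)^2 = y1 + y4" using Dnz c2_sq_add[OF c2, of y1 y4] by simp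
  moreover obtain m' where m': "m = Suc m'" using m by (cases m) auto
  ultimately show ?thesis using Y Pr_closed[OF c2, of C D m'] by simp
qed

lemma det_one: assumes c2: "(1::'a::field) + 1 = 0"
  and Dq: "D ^ (2^m) = D" and Dnz: "D \<noteq> 0" and m: "m \<ge> 1"
  shows "Sseq C D (Suc m) * (D * Sseq C D (m - 1) ^ 2) + D * Sseq C D m ^ 2 * Sseq (C::'a) D m = 1"
proof -
  obtain m' where m': "m = Suc m'" using m by (cases m) auto
  have "D ^ (2^m - 1) * D = D ^ (2^m)" by (simp add: power_Suc2[symmetric])
  then have "D ^ (2^m - 1) = 1" using Dq Dnz by simp
  then have "mdet (Pr C D 0 m) = 1" using mdet_Pr[OF c2, of C D m] by simp
  then show ?thesis using Pr_closed[OF c2, of C D m'] m' by (simp add: mdet_def c2_diff[OF c2] del: Sseq.simps)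
qed

lemma Sseq_frob: assumes c2: "(1::'a::field) + 1 = 0"
  and Cq: "C ^ (2^m) = C" and Dq: "D ^ (2^m) = D" and nj: "n + j = m"
  shows "Sseq C D (Suc (Suc n)) ^ (2^j) = C * Sseq C D (Suc n) ^ (2^j) + D * Sseq (C::'a) D n ^ (2^j)"
proof -
  have "Sseq C D (Suc (Suc n)) ^ (2^j) = (C^(2^n))^(2^j) * Sseq C D (Suc n) ^ (2^j) + (D^(2^n))^(2^j) * Sseq C D n ^ (2^j)"
    by (simp only: Sseq.simps(3) c2_pow2_add[OF c2] power_mult_distrib)
  also have "(C^(2^n))^(2^j) = C" using Cq nj by (simp add: pow2_pow2)
  also have "(D^(2^n))^(2^j) = D" using Dq nj by (simp add: pow2_pow2)
  finally show ?thesis .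
qed

definition tf :: "'a::field \<Rightarrow> 'a \<Rightarrow> (nat \<Rightarrow> 'a) \<Rightarrow> 'a \<Rightarrow> nat \<Rightarrow> 'a" where
  "tf C D c u k = c k ^ 4 * u ^ (2 ^ (k + 2)) + C * c k ^ 2 * u ^ (2 ^ (k + 1)) + D * c k * u ^ (2 ^ k)"

lemma Lsum: assumes c2: "(1::'a::field) + 1 = 0"
  shows "(\<Sum>k\<in>A. c k * u ^ (2 ^ k)) ^ 4 + C * (\<Sum>k\<in>A. c k * u ^ (2 ^ k)) ^ 2 + D * (\<Sum>k\<in>A. c k * u ^ (2 ^ k))
    = (\<Sum>k\<in>A. tf C D c (u::'a) k)"
proof -
  have "(\<Sum>k\<in>A. c k * u ^ (2 ^ k)) ^ 4 = (\<Sum>k\<in>A. c k * u ^ (2 ^ k)) ^ (2^2)" by simp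
  also have "\<dots> = (\<Sum>k\<in>A. (c k * u ^ (2 ^ k)) ^ (2^2))" by (rule c2_pow2_sum[OF c2])
  also have "\<dots> = (\<Sum>k\<in>A. c k ^ 4 * u ^ (2 ^ (k + 2)))"
  proof (rule sum.cong)
    fix k show "(c k * u ^ (2 ^ k)) ^ (2^2) = c k ^ 4 * u ^ (2 ^ (k + 2))"
      by (simp only: power_mult_distrib pow2_pow2) simp
  qed simp
  finally have 1: "(\<Sum>k\<in>A. c k * u ^ (2 ^ k)) ^ 4 = (\<Sum>k\<in>A. c k ^ 4 * u ^ (2 ^ (k + 2)))" .
  have "(\<Sum>k\<in>A. c k * u ^ (2 ^ k)) ^ 2 = (\<Sum>k\<in>A. c k * u ^ (2 ^ k)) ^ (2^1)" by simp
  also have "\<dots> = (\<Sum>k\<in>A. (c k * u ^ (2 ^ k)) ^ (2^1))" by (rule c2_pow2_sum[OF c2])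
  also have "\<dots> = (\<Sum>k\<in>A. c k ^ 2 * u ^ (2 ^ (k + 1)))"
  proof (rule sum.cong)
    fix k show "(c k * u ^ (2 ^ k)) ^ (2^1) = c k ^ 2 * u ^ (2 ^ (k + 1))"
      by (simp only: power_mult_distrib pow2_pow2) simp
  qed simp
  finally have 2: "(\<Sum>k\<in>A. c k * u ^ (2 ^ k)) ^ 2 = (\<Sum>k\<in>A. c k ^ 2 * u ^ (2 ^ (k + 1)))" .
  show ?thesis unfolding 1 2 tf_def
    by (simp add: sum.distrib sum_distrib_left mult.assoc)
qed

lemma tele: assumes c2: "(1::'a::field) + 1 = 0"
  and rel: "\<forall>k. k + 2 \<le> Suc p \<longrightarrow> D * c (k + 2) = c k ^ 4 + C * c (k + 1) ^ 2"
  shows "(\<Sum>k\<le>Suc p. tf C D c u k) = D * c 0 * u + (C * c 0 ^ 2 + D * c 1) * u ^ 2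
     + (c p ^ 4 + C * c (Suc p) ^ 2) * u ^ (2 ^ (p + 2)) + c (Suc p) ^ 4 * (u::'a) ^ (2 ^ (p + 3))"
  using rel
proof (induction p)
  case 0
  show ?case by (simp add: tf_def atMost_Suc eval_nat_numeral algebra_simps)
next
  case (Suc p)
  have r: "D * c (Suc (Suc p)) = c p ^ 4 + C * c (Suc p) ^ 2" using Suc.prems[rule_format, of p] by simp
  have IH: "(\<Sum>k\<le>Suc p. tf C D c u k) = D * c 0 * u + (C * c 0 ^ 2 + D * c 1) * u ^ 2
     + (c p ^ 4 + C * c (Suc p) ^ 2) * u ^ (2 ^ (p + 2)) + c (Suc p) ^ 4 * u ^ (2 ^ (p + 3))"
    using Suc.prems by (intro Suc.IH) auto
  have e1: "Suc (Suc p) + 2 = Suc p + 3" "Suc (Suc p) + 1 = Suc p + 2" "Suc (Suc p) = p + 2" by simp_all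
  have tfS: "tf C D c u (Suc (Suc p)) = c (Suc (Suc p)) ^ 4 * u ^ (2 ^ (Suc p + 3)) + C * c (Suc (Suc p)) ^ 2 * u ^ (2 ^ (Suc p + 2))
      + (c p ^ 4 + C * c (Suc p) ^ 2) * u ^ (2 ^ (p + 2))"
    unfolding tf_def mult.assoc[symmetric] r e1(1,2) by (simp only: e1(3))
  have alg: "\<And>a X U2 Y U3 Z U4 W. a + X*U2 + Y*U3 + (Z*U4 + W*U3 + X*U2) = a + (Y + W)*U3 + Z*(U4::'a)"
  proof -
    fix a X U2 Y U3 Z U4 W
    have "a + X*U2 + Y*U3 + (Z*U4 + W*U3 + X*U2) = a + (Y + W)*U3 + Z*(U4::'a) + (X*U2 + X*U2)"
      by (simp add: algebra_simps)
    then show "a + X*U2 + Y*U3 + (Z*U4 + W*U3 + X*U2) = a + (Y + W)*U3 + Z*(U4::'a)"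
      by (simp only: c2_add_self[OF c2] add_0_right)
  qed
  have "(\<Sum>k\<le>Suc (Suc p). tf C D c u k) = (\<Sum>k\<le>Suc p. tf C D c u k) + tf C D c u (Suc (Suc p))"
    by (simp only: sum.atMost_Suc)
  also have "\<dots> = D * c 0 * u + (C * c 0 ^ 2 + D * c 1) * u ^ 2
     + (c (Suc p) ^ 4 + C * c (Suc (Suc p)) ^ 2) * u ^ (2 ^ (Suc p + 2)) + c (Suc (Suc p)) ^ 4 * u ^ (2 ^ (Suc p + 3))"
    unfolding IH tfS numeral_3_eq_3 add_Suc_right add_0_right numeral_2_eq_2 by (rule alg)
  finally show ?case .
qed

lemma c2_add_self2: fixes x :: "'a::field" assumes c2: "(1::'a) + 1 = 0" shows "x + (x + y) = y"
  using c2_add_self[OF c2, of x] by (simp add: add.assoc[symmetric])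

lemma c2_add_self3: fixes x :: "'a::field" assumes c2: "(1::'a) + 1 = 0" shows "(x + y) + x = y"
proof -
  have "(x + y) + x = y + (x + x)" by (simp add: algebra_simps)
  then show ?thesis using c2_add_self[OF c2, of x] by simp
qed

definition aa :: "'a::field \<Rightarrow> 'a \<Rightarrow> 'a \<Rightarrow> nat \<Rightarrow> 'a" where
  "aa A C D k = A ^ (2^k - 1) * Sseq C D (Suc k)"

definition bb :: "nat \<Rightarrow> 'a::field \<Rightarrow> 'a \<Rightarrow> nat \<Rightarrow> 'a" where
  "bb m C D k = D ^ (2^k) * Sseq C D (m - 1 - k) ^ (2^(k+1))"

lemma L_add: assumes c2: "(1::'a::field) + 1 = 0"
  shows "(x + y) ^ 4 + C * (x + y) ^ 2 + D * (x + y) = (x ^ 4 + C * x ^ 2 + D * x) + (y ^ 4 + C * y ^ 2 + D * (y::'a))"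
proof -
  have "(x + y) ^ 4 = x ^ 4 + y ^ 4" using c2_pow2_add[OF c2, of x y 2] by simp
  moreover have "(x + y) ^ 2 = x ^ 2 + y ^ 2" by (rule c2_sq_add[OF c2])
  ultimately show ?thesis by (simp add: algebra_simps)
qed

lemma rel_a: assumes c2: "(1::'a::field) + 1 = 0" and AD: "A * D = 1"
  shows "D * aa A C D (k + 2) = aa A C D k ^ 4 + C * aa A C (D::'a) (k + 1) ^ 2"
proof -
  obtain n where n: "2 ^ k = Suc n" by (metis not0_implies_Suc power_not_zero zero_neq_numeral)
  have e1: "(2::nat) ^ (k + 2) - 1 = 4 * n + 3" using n by (simp add: power_add)
  have e2: "(2::nat) ^ k - 1 = n" using n by simp
  have e3: "(2::nat) ^ (k + 1) - 1 = 2 * n + 1" using n by (simp add: power_add)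
  have dual: "Sseq C D (Suc (k + 2)) = C * Sseq C D (Suc (k + 1)) ^ 2 + D^2 * Sseq C D (Suc k) ^ 4"
    using Sseq_dual[OF c2, of C D "Suc k"] by simp
  have "D * aa A C D (k + 2) = (A * D) * A ^ (4 * n + 2) * Sseq C D (Suc (k + 2))"
    unfolding aa_def e1 by (simp add: algebra_simps eval_nat_numeral)
  also have "\<dots> = A ^ (4 * n + 2) * (C * Sseq C D (Suc (k + 1)) ^ 2 + D^2 * Sseq C D (Suc k) ^ 4)"
    using AD dual by simp
  also have "\<dots> = C * (A ^ (2 * n + 1) * Sseq C D (Suc (k + 1))) ^ 2 + (A * D) ^ 2 * (A ^ n * Sseq C D (Suc k)) ^ 4"
    by (simp add: algebra_simps power_mult_distrib power_add power_mult[symmetric] eval_nat_numeral)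
  also have "\<dots> = aa A C D k ^ 4 + C * aa A C D (k + 1) ^ 2"
    unfolding aa_def e2 e3 AD by simp
  finally show ?thesis .
qed

lemma rel_b: assumes c2: "(1::'a::field) + 1 = 0"
  and Cq: "C ^ (2^m) = C" and Dq: "D ^ (2^m) = D" and k: "k + 3 \<le> m"
  shows "D * bb m C D (k + 2) = bb m C D k ^ 4 + C * bb m C (D::'a) (k + 1) ^ 2"
proof -
  define n where "n = m - 3 - k"
  have nj: "n + (k + 3) = m" using k n_def by simp
  have i1: "m - 1 - k = Suc (Suc n)" "m - 1 - (k + 1) = Suc n" "m - 1 - (k + 2) = n"
    using k n_def by simp_all
  have fr: "Sseq C D (Suc (Suc n)) ^ (2^(k+3)) = C * Sseq C D (Suc n) ^ (2^(k+3)) + D * Sseq C D n ^ (2^(k+3))"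
    by (rule Sseq_frob[OF c2 Cq Dq nj])
  have p1: "(D ^ (2^k)) ^ 4 = D ^ (2^(k+2))" "(D ^ (2^(k+1))) ^ 2 = D ^ (2^(k+2))"
    by (simp_all add: power_mult[symmetric] power_add mult.commute)
  have p2a: "(x ^ (2^(k+1))) ^ 4 = x ^ (2^(k+3))" for x :: 'a
    by (simp only: power_mult[symmetric]) (simp add: power_add mult.commute)
  have p2b: "(x ^ (2^(k+2))) ^ 2 = x ^ (2^(k+3))" for x :: 'a
    by (simp only: power_mult[symmetric]) (simp add: power_add mult.commute)
  note p2 = p2a p2b
  have kk: "k + 1 + 1 = k + 2" by simp
  have "bb m C D k ^ 4 + C * bb m C D (k + 1) ^ 2
      = D ^ (2^(k+2)) * (Sseq C D (Suc (Suc n)) ^ (2^(k+3)) + C * Sseq C D (Suc n) ^ (2^(k+3)))"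
    unfolding bb_def i1 kk power_mult_distrib p1 p2 by (simp add: algebra_simps)
  also have "Sseq C D (Suc (Suc n)) ^ (2^(k+3)) + C * Sseq C D (Suc n) ^ (2^(k+3)) = D * Sseq C D n ^ (2^(k+3))"
    unfolding fr by (rule c2_add_self3[OF c2])
  finally have "bb m C D k ^ 4 + C * bb m C D (k + 1) ^ 2 = D ^ (2^(k+2)) * (D * Sseq C D n ^ (2^(k+3)))" .
  moreover have "D * bb m C D (k + 2) = D * (D ^ (2^(k+2)) * Sseq C D n ^ (2^(k+3)))"
    unfolding bb_def i1 by (simp add: numeral_3_eq_3)
  ultimately show ?thesis by (simp add: algebra_simps)
qed

lemma LR_main: assumes c2: "(1::'a::field) + 1 = 0" and m2: "m \<ge> 2"
  and Cq: "C ^ (2^m) = C" and Dq: "D ^ (2^m) = D" and AD: "A * D = 1" and Aq: "A ^ (2^m) = A"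
  and uq: "u ^ (2^m) = u"
  shows "(\<Sum>k<m. (bb m C D k + aa A C D k) * u^(2^k)) ^ 4 + C * (\<Sum>k<m. (bb m C D k + aa A C D k) * u^(2^k)) ^ 2
     + D * (\<Sum>k<m. (bb m C D k + aa A C D k) * u^(2^k)) = D * (Sseq C D (Suc m) + D * Sseq C D (m - 1) ^ 2) * (u::'a)"
proof -
  obtain p where m: "m = Suc (Suc p)" using m2 by (metis add_2_eq_Suc le_Suc_ex)
  have lt: "{..<m} = {..Suc p}" unfolding m by (rule lessThan_Suc_atMost)
  have split: "(\<Sum>k<m. (bb m C D k + aa A C D k) * u^(2^k)) = (\<Sum>k\<le>Suc p. bb m C D k * u^(2^k)) + (\<Sum>k\<le>Suc p. aa A C D k * u^(2^k))"
    unfolding lt by (simp add: sum.distrib distrib_right)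
  have La: "(\<Sum>k\<le>Suc p. aa A C D k * u^(2^k)) ^ 4 + C * (\<Sum>k\<le>Suc p. aa A C D k * u^(2^k)) ^ 2 + D * (\<Sum>k\<le>Suc p. aa A C D k * u^(2^k))
     = D * aa A C D 0 * u + (C * aa A C D 0 ^ 2 + D * aa A C D 1) * u ^ 2
     + (aa A C D p ^ 4 + C * aa A C D (Suc p) ^ 2) * u ^ (2 ^ (p + 2)) + aa A C D (Suc p) ^ 4 * u ^ (2 ^ (p + 3))"
    unfolding Lsum[OF c2] by (rule tele[OF c2]) (intro allI impI, rule rel_a[OF c2 AD])
  have Lb: "(\<Sum>k\<le>Suc p. bb m C D k * u^(2^k)) ^ 4 + C * (\<Sum>k\<le>Suc p. bb m C D k * u^(2^k)) ^ 2 + D * (\<Sum>k\<le>Suc p. bb m C D k * u^(2^k))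
     = D * bb m C D 0 * u + (C * bb m C D 0 ^ 2 + D * bb m C D 1) * u ^ 2
     + (bb m C D p ^ 4 + C * bb m C D (Suc p) ^ 2) * u ^ (2 ^ (p + 2)) + bb m C D (Suc p) ^ 4 * u ^ (2 ^ (p + 3))"
    unfolding Lsum[OF c2] by (rule tele[OF c2]) (intro allI impI, rule rel_b[OF c2 Cq Dq], simp add: m)
  have u1: "u ^ (2 ^ (p + 2)) = u" using uq m by simp
  have u2: "u ^ (2 ^ (p + 3)) = u ^ 2"
  proof -
    have "u ^ (2 ^ (p + 3)) = (u ^ (2^m)) ^ (2^1)" unfolding pow2_pow2 m by (simp add: numeral_3_eq_3)
    then show ?thesis using uq by simp
  qed
  have Anz: "A \<noteq> 0" using AD by auto
  have A1: "A ^ (2^m - 1) = 1"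
  proof -
    have "A ^ (2^m - 1) * A = A ^ (2^m)" by (simp add: power_Suc2[symmetric])
    then show ?thesis using Aq Anz by simp
  qed
  have a0: "aa A C D 0 = 1" by (simp add: aa_def)
  have a1: "D * aa A C D 1 = C" using AD by (simp add: aa_def algebra_simps)
  have aP: "aa A C D p ^ 4 + C * aa A C D (Suc p) ^ 2 = D * Sseq C D (Suc m)"
  proof -
    have "aa A C D p ^ 4 + C * aa A C D (Suc p) ^ 2 = D * aa A C D (p + 2)" using rel_a[OF c2 AD, where k=p and C=C] by simp
    also have "aa A C D (p + 2) = Sseq C D (Suc m)" unfolding aa_def using A1 m by simp
    finally show ?thesis .
  qed
  have aS: "aa A C D (Suc p) ^ 4 = D^2 * Sseq C D m ^ 4"
  proof -
    define E where "E = (2::nat) ^ Suc p - 1"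
    obtain r where r: "(2::nat) ^ p = Suc r" by (metis not0_implies_Suc power_not_zero zero_neq_numeral)
    have "4 * E + 2 = 2 * (2^m - 1)" unfolding E_def m using r by simp
    then have "A ^ (4 * E) * A ^ 2 = (A ^ (2^m - 1)) ^ 2" by (simp add: power_add[symmetric] power_mult[symmetric] mult.commute)
    then have "A ^ (4 * E) * A ^ 2 = 1" using A1 by simp
    then have "A ^ (4 * E) * (A * D) ^ 2 = D ^ 2" by (metis mult.assoc power_mult_distrib mult_1)
    then have "A ^ (4 * E) = D ^ 2" using AD by simp
    then show ?thesis unfolding aa_def E_def[symmetric] m
      by (simp add: power_mult_distrib power_mult[symmetric] mult.commute)
  qed
  have b0: "bb m C D 0 = D * Sseq C D (Suc p) ^ 2" by (simp add: bb_def m)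
  have b1: "bb m C D 1 = D ^ 2 * Sseq C D p ^ 4" by (simp add: bb_def m)
  have bS: "bb m C D (Suc p) = 0" by (simp add: bb_def m)
  have bP: "bb m C D p ^ 4 = D"
  proof -
    have "bb m C D p = D ^ (2^p)" by (simp add: bb_def m)
    then have "bb m C D p ^ 4 = D ^ (2^p * 2^2)" by (simp add: power_mult)
    also have "2^p * 2^2 = (2::nat)^m" by (simp add: m power_add[symmetric])
    finally show ?thesis using Dq by simp
  qed
  have fr: "Sseq C D m ^ 4 = C * Sseq C D (Suc p) ^ 4 + D * Sseq C D p ^ 4"
    using Sseq_frob[OF c2 Cq Dq, of p 2] m by simp
  have m1: "m - 1 = Suc p" using m by simp
  have "(\<Sum>k<m. (bb m C D k + aa A C D k) * u^(2^k)) ^ 4 + C * (\<Sum>k<m. (bb m C D k + aa A C D k) * u^(2^k)) ^ 2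
     + D * (\<Sum>k<m. (bb m C D k + aa A C D k) * u^(2^k))
     = (D * (D * Sseq C D (Suc p) ^ 2) * u + (C * (D * Sseq C D (Suc p) ^ 2) ^ 2 + D * (D ^ 2 * Sseq C D p ^ 4)) * u ^ 2
        + (D + C * 0 ^ 2) * u + 0 ^ 4 * u ^ 2)
     + (D * 1 * u + (C * 1 ^ 2 + C) * u ^ 2 + D * Sseq C D (Suc m) * u
        + D^2 * (C * Sseq C D (Suc p) ^ 4 + D * Sseq C D p ^ 4) * u ^ 2)"
    unfolding split L_add[OF c2] La Lb u1 u2 a0 a1 aP aS b0 b1 bS bP fr by simp
  also have "\<dots> = D * (Sseq C D (Suc m) + D * Sseq C D (Suc p) ^ 2) * u + (D * u + D * u) + (C + C) * u ^ 2
     + ((C * D^2 * Sseq C D (Suc p) ^ 4 * u^2 + D^3 * Sseq C D p ^ 4 * u^2) + (C * D^2 * Sseq C D (Suc p) ^ 4 * u^2 + D^3 * Sseq C D p ^ 4 * u^2))"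
    by (simp add: algebra_simps power_mult_distrib eval_nat_numeral)
  also have "\<dots> = D * (Sseq C D (Suc m) + D * Sseq C D (Suc p) ^ 2) * u"
    by (simp only: c2_add_self[OF c2] mult_zero_left add_0_right)
  finally show ?thesis unfolding m1 .
qed

lemma LA_main: assumes c2: "(1::'a::field) + 1 = 0" and m2: "m \<ge> 2"
  and AD: "A * D = 1" and Aq: "A ^ (2^m) = A" and uq: "u ^ (2^m) = u"
  shows "(\<Sum>k<m. aa A C D k * u^(2^k)) ^ 4 + C * (\<Sum>k<m. aa A C D k * u^(2^k)) ^ 2
     + D * (\<Sum>k<m. aa A C D k * u^(2^k)) = D * (1 + Sseq C D (Suc m)) * u + D^2 * Sseq C D m ^ 4 * (u::'a) ^ 2"
proof -
  obtain p where m: "m = Suc (Suc p)" using m2 by (metis add_2_eq_Suc le_Suc_ex)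
  have lt: "{..<m} = {..Suc p}" unfolding m by (rule lessThan_Suc_atMost)
  have La: "(\<Sum>k\<le>Suc p. aa A C D k * u^(2^k)) ^ 4 + C * (\<Sum>k\<le>Suc p. aa A C D k * u^(2^k)) ^ 2 + D * (\<Sum>k\<le>Suc p. aa A C D k * u^(2^k))
     = D * aa A C D 0 * u + (C * aa A C D 0 ^ 2 + D * aa A C D 1) * u ^ 2
     + (aa A C D p ^ 4 + C * aa A C D (Suc p) ^ 2) * u ^ (2 ^ (p + 2)) + aa A C D (Suc p) ^ 4 * u ^ (2 ^ (p + 3))"
    unfolding Lsum[OF c2] by (rule tele[OF c2]) (intro allI impI, rule rel_a[OF c2 AD])
  have u1: "u ^ (2 ^ (p + 2)) = u" using uq m by simp
  have u2: "u ^ (2 ^ (p + 3)) = u ^ 2"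
  proof -
    have "u ^ (2 ^ (p + 3)) = (u ^ (2^m)) ^ (2^1)" unfolding pow2_pow2 m by (simp add: numeral_3_eq_3)
    then show ?thesis using uq by simp
  qed
  have Anz: "A \<noteq> 0" using AD by auto
  have A1: "A ^ (2^m - 1) = 1"
  proof -
    have "A ^ (2^m - 1) * A = A ^ (2^m)" by (simp add: power_Suc2[symmetric])
    then show ?thesis using Aq Anz by simp
  qed
  have a0: "aa A C D 0 = 1" by (simp add: aa_def)
  have a1: "D * aa A C D 1 = C" using AD by (simp add: aa_def algebra_simps)
  have aP: "aa A C D p ^ 4 + C * aa A C D (Suc p) ^ 2 = D * Sseq C D (Suc m)"
  proof -
    have "aa A C D p ^ 4 + C * aa A C D (Suc p) ^ 2 = D * aa A C D (p + 2)" using rel_a[OF c2 AD, where k=p and C=C] by simp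
    also have "aa A C D (p + 2) = Sseq C D (Suc m)" unfolding aa_def using A1 m by simp
    finally show ?thesis .
  qed
  have aS: "aa A C D (Suc p) ^ 4 = D^2 * Sseq C D m ^ 4"
  proof -
    define E where "E = (2::nat) ^ Suc p - 1"
    obtain r where r: "(2::nat) ^ p = Suc r" by (metis not0_implies_Suc power_not_zero zero_neq_numeral)
    have "4 * E + 2 = 2 * (2^m - 1)" unfolding E_def m using r by simp
    then have "A ^ (4 * E) * A ^ 2 = (A ^ (2^m - 1)) ^ 2" by (simp add: power_add[symmetric] power_mult[symmetric] mult.commute)
    then have "A ^ (4 * E) * A ^ 2 = 1" using A1 by simp
    then have "A ^ (4 * E) * (A * D) ^ 2 = D ^ 2" by (metis mult.assoc power_mult_distrib mult_1)
    then have "A ^ (4 * E) = D ^ 2" using AD by simp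
    then show ?thesis unfolding aa_def E_def[symmetric] m
      by (simp add: power_mult_distrib power_mult[symmetric] mult.commute)
  qed
  have "(\<Sum>k<m. aa A C D k * u^(2^k)) ^ 4 + C * (\<Sum>k<m. aa A C D k * u^(2^k)) ^ 2
     + D * (\<Sum>k<m. aa A C D k * u^(2^k))
     = D * 1 * u + (C * 1 ^ 2 + C) * u ^ 2 + D * Sseq C D (Suc m) * u + D^2 * Sseq C D m ^ 4 * u ^ 2"
    unfolding lt La u1 u2 a0 a1 aP aS by simp
  also have "\<dots> = D * (1 + Sseq C D (Suc m)) * u + D^2 * Sseq C D m ^ 4 * u ^ 2 + (C + C) * u^2"
    by (simp add: algebra_simps)
  also have "\<dots> = D * (1 + Sseq C D (Suc m)) * u + D^2 * Sseq C D m ^ 4 * u ^ 2"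
    by (simp only: c2_add_self[OF c2] mult_zero_left add_0_right)
  finally show ?thesis .
qed

lemma NV: fixes c :: "nat \<Rightarrow> 'a::{field,finite}"
  assumes c2: "(1::'a) + 1 = 0" and card: "CARD('a) = (2^m)^2" and j: "j < m" and cj: "c j \<noteq> 0"
  shows "\<exists>x. (\<Sum>k<m. c k * (x ^ (2^m) + x) ^ (2^k)) \<noteq> 0"
proof (rule ccontr)
  assume H: "\<not> (\<exists>x. (\<Sum>k<m. c k * (x ^ (2^m) + x) ^ (2^k)) \<noteq> 0)"
  define P where "P = (\<Sum>k<m. monom (c k) (2^m * 2^k) + monom (c k) (2^k))"
  have ev: "poly P x = (\<Sum>k<m. c k * (x ^ (2^m) + x) ^ (2^k))" for x
    unfolding P_def poly_sum
    by (rule sum.cong) (simp_all only: poly_add poly_monom c2_pow2_add[OF c2] power_mult distrib_left)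
  have "coeff P (2^j) = (\<Sum>k<m. (if 2^m * 2^k = (2::nat)^j then c k else 0) + (if 2^k = (2::nat)^j then c k else 0))"
    unfolding P_def coeff_sum by simp
  also have "\<dots> = (\<Sum>k<m. (if k = j then c k else 0))"
  proof (rule sum.cong)
    fix k assume "k \<in> {..<m}"
    have "2^m * 2^k \<noteq> (2::nat)^j"
    proof
      assume "2^m * 2^k = (2::nat)^j"
      then have "(2::nat)^(m+k) = 2^j" by (simp add: power_add)
      then have "m + k = j" by simp
      then show False using j by simp
    qed
    then show "(if 2^m * 2^k = (2::nat)^j then c k else 0) + (if 2^k = (2::nat)^j then c k else 0) = (if k = j then c k else 0)"
      by simp
  qed simp
  also have "\<dots> = c j" using j by simp
  finally have "coeff P (2^j) \<noteq> 0" using cj by simp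
  then have Pnz: "P \<noteq> 0" by auto
  have "degree P \<le> 2^m * 2^(m-1)"
    unfolding P_def
  proof (rule degree_sum_le)
    fix k assume k: "k \<in> {..<m}"
    then have "(2::nat)^k \<le> 2^(m-1)" by (intro power_increasing) auto
    then have a: "(2::nat)^m * 2^k \<le> 2^m * 2^(m-1)" by simp
    have "(2::nat)^(m-1) \<le> 2^m * 2^(m-1)" by simp
    then have b: "(2::nat)^k \<le> 2^m * 2^(m-1)" using \<open>(2::nat)^k \<le> 2^(m-1)\<close> by linarith
    show "degree (monom (c k) (2^m * 2^k) + monom (c k) (2^k)) \<le> 2^m * 2^(m-1)"
      by (rule degree_add_le; rule order_trans[OF degree_monom_le]; rule a b)
  qed simp
  also have "\<dots> < 2^m * 2^m" using j by simp
  also have "\<dots> = CARD('a)" using card by (simp add: power2_eq_square)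
  finally have dl: "degree P < CARD('a)" .
  have "{x. poly P x = 0} = UNIV" using H ev by auto
  then have "CARD('a) \<le> degree P" using card_poly_roots_bound[OF Pnz] by simp
  then show False using dl by simp
qed

lemma char2_of_card: assumes card: "CARD('a::{field,finite}) = (2^m)^2" and m: "m > 0"
  shows "(1::'a) + 1 = 0"
proof -
  have "even (CARD('a))" using card m by simp
  then have "(-1::'a) ^ CARD('a) = 1" by simp
  moreover have "(-1::'a) ^ CARD('a) = -1" by (rule fin_field_pow_card)
  ultimately have "(1::'a) = -1" by simp
  then show ?thesis by (metis add.right_inverse)
qed

lemma K_add: assumes c2: "(1::'a::field) + 1 = 0" and "x ^ (2^m) = x" "y ^ (2^m) = y"
  shows "(x + y) ^ (2^m) = x + (y::'a)"
  using assms by (simp add: c2_pow2_add[OF c2])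

lemma K_mult: assumes "x ^ n = x" "y ^ n = y" shows "(x * y) ^ n = x * (y::'a::field)"
  using assms by (simp add: power_mult_distrib)

lemma K_pow: assumes "x ^ n = x" shows "(x ^ j) ^ n = (x::'a::field) ^ j"
  using assms by (metis power_mult power_mult[of x n j] mult.commute)

lemma K_sum: assumes c2: "(1::'a::field) + 1 = 0" and "\<And>k. k \<in> A \<Longrightarrow> f k ^ (2^m) = f k"
  shows "(sum f A) ^ (2^m) = (sum f A :: 'a)"
  using assms by (simp add: c2_pow2_sum[OF c2])

lemma K_Sseq: assumes c2: "(1::'a::field) + 1 = 0" and Cq: "C ^ (2^m) = C" and Dq: "D ^ (2^m) = D"
  shows "Sseq C D n ^ (2^m) = Sseq (C::'a) D n"
proof (induction n rule: nat_less_induct)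
  case (1 n)
  show ?case
  proof (cases n)
    case 0 then show ?thesis by simp
  next
    case (Suc n1)
    show ?thesis
    proof (cases n1)
      case 0 then show ?thesis using Suc by simp
    next
      case (Suc n2)
      have h1: "Sseq C D (Suc n2) ^ (2^m) = Sseq C D (Suc n2)" using 1 Suc \<open>n = Suc n1\<close> by simp
      have h2: "Sseq C D n2 ^ (2^m) = Sseq C D n2" using 1 Suc \<open>n = Suc n1\<close> by simp
      have "(C ^ (2^n2)) ^ (2^m) = C ^ (2^n2)" by (rule K_pow[OF Cq])
      moreover have "(D ^ (2^n2)) ^ (2^m) = D ^ (2^n2)" by (rule K_pow[OF Dq])
      ultimately show ?thesis using h1 h2 Suc \<open>n = Suc n1\<close>
        by (simp only: Sseq.simps(3) c2_pow2_add[OF c2] power_mult_distrib)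
    qed
  qed
qed

lemma TrP: fixes s \<delta> b :: "'a::{field,finite}" assumes c2: "(1::'a::{field,finite}) + 1 = 0"
  and card: "CARD('a) = q ^ 2" and q: "q = 2^m" and bq: "b ^ q = b" and s: "s ^ q = s"
  shows "(b * (s + \<delta>) ^ (2 * q + 2 ^ i + 2)) ^ q + b * (s + \<delta>) ^ (2 * q + 2 ^ i + 2)
    = b * (\<delta> + \<delta> ^ q) ^ (2^i) * (s ^ 4 + (\<delta> + \<delta> ^ q) ^ 2 * s ^ 2 + (\<delta> * \<delta> ^ q) ^ 2)"
proof -
  have qq: "(x ^ q) ^ q = x" for x :: 'a
    using fin_field_pow_card[of x] card by (simp add: power_mult[symmetric] power2_eq_square)
  define y where "y = s + \<delta>"
  have "y ^ q = s ^ q + \<delta> ^ q" unfolding y_def q by (rule c2_pow2_add[OF c2])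
  then have yq: "y ^ q = s + \<delta> ^ q" using s by simp
  have ye: "y ^ (2 * q + 2 ^ i + 2) = (y ^ q) ^ 2 * y ^ (2^i) * y ^ 2"
    by (simp add: power_add power_mult mult.commute power2_eq_square)
  have yeq: "(y ^ (2 * q + 2 ^ i + 2)) ^ q = y ^ 2 * (y ^ q) ^ (2^i) * (y ^ q) ^ 2"
  proof -
    have e1: "((y ^ q) ^ 2) ^ q = y ^ 2" by (metis power_mult mult.commute qq)
    have e2: "(y ^ (2^i)) ^ q = (y ^ q) ^ (2^i)" by (metis power_mult mult.commute)
    have e3: "(y ^ 2) ^ q = (y ^ q) ^ 2" by (metis power_mult mult.commute)
    show ?thesis unfolding ye power_mult_distrib e1 e2 e3 ..
  qed
  have frob: "y ^ (2^i) + (y ^ q) ^ (2^i) = (y + y ^ q) ^ (2^i)" by (simp add: c2_pow2_add[OF c2])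
  have T: "y + y ^ q = \<delta> + \<delta> ^ q"
  proof -
    have "y + y ^ q = (s + s) + (\<delta> + \<delta> ^ q)" unfolding yq unfolding y_def by (simp add: algebra_simps)
    then show ?thesis using c2_add_self[OF c2, of s] by simp
  qed
  have N: "(y * y ^ q) ^ 2 = s ^ 4 + (\<delta> + \<delta> ^ q) ^ 2 * s ^ 2 + (\<delta> * \<delta> ^ q) ^ 2"
  proof -
    have "y * y ^ q = s ^ 2 + (\<delta> + \<delta> ^ q) * s + \<delta> * \<delta> ^ q" unfolding yq unfolding y_def by (simp add: algebra_simps power2_eq_square)
    then show ?thesis by (simp add: c2_sq_add[OF c2] power_mult_distrib power_mult[symmetric])
  qed
  have "(b * y ^ (2 * q + 2 ^ i + 2)) ^ q + b * y ^ (2 * q + 2 ^ i + 2)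
     = b * ((y * y ^ q) ^ 2 * (y ^ (2^i) + (y ^ q) ^ (2^i)))"
    unfolding power_mult_distrib bq yeq by (subst ye) (simp add: algebra_simps power_mult_distrib)
  also have "\<dots> = b * (\<delta> + \<delta> ^ q) ^ (2^i) * (s ^ 4 + (\<delta> + \<delta> ^ q) ^ 2 * s ^ 2 + (\<delta> * \<delta> ^ q) ^ 2)"
    unfolding frob T N by (simp add: algebra_simps)
  finally show ?thesis unfolding y_def .
qed

lemma nat_idx: assumes "k < m" shows "nat (int m - 2 - int k + 1) = m - 1 - k"
  using assms by linarith

lemma powi_idx: fixes A :: "'a::field" shows "(1 / A) powi (1 - 2 ^ k) = A ^ (2^k - 1)"
proof (cases k)
  case 0 then show ?thesis by simp
next
  case (Suc k')
  have "(1::int) \<le> 2 ^ k'" by simp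
  then have "\<not> (1 - 2 ^ k \<ge> (0::int))" unfolding Suc power_Suc by linarith
  moreover have "nat (- (1 - 2 ^ k)) = (2::nat) ^ k - 1" by (simp add: nat_diff_distrib nat_power_eq)
  ultimately show ?thesis by (simp add: power_int_def)
qed

theorem theorem3p13:
  fixes m i q :: nat and b \<delta> :: "'a::{field,finite}"
  assumes m_pos: "m > 0"
    and q_def: "q = 2 ^ m"
    and card: "CARD('a) = q ^ 2"
    and b_Fq: "b ^ q = b" and b_nz: "b \<noteq> 0"
    and delta_notin: "\<delta> ^ q \<noteq> \<delta>"
    and perm: "bij (\<lambda>x::'a. b * (x ^ q + x + \<delta>) ^ (2 * q + 2 ^ i + 2) + x)"
  shows
    "let P = (\<lambda>x::'a. b * (x ^ q + x + \<delta>) ^ (2 * q + 2 ^ i + 2) + x);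
         A = b * (trace2 q \<delta>) ^ (2 ^ i);
         B = b * (trace2 q \<delta>) ^ (2 ^ i) * \<delta> ^ (2 * q + 2);
         C = (trace2 q \<delta>) ^ 2;
         D = 1 / A;
         Pinv = (\<lambda>x::'a. x + b * (\<delta> + (\<Sum>k = 0..m - 1.
                   (D ^ (2 ^ k) * (S C D (int m - 2 - int k)) ^ (2 ^ (k + 1))
                    + D powi (1 - 2 ^ k) * S C D (int k)) * (x ^ q + x + B) ^ (2 ^ k)))
                  ^ (2 * q + 2 ^ i + 2))
     in \<forall>c. P (Pinv c) = c \<and> Pinv (P c) = c"
proof -
  have c2: "(1::'a) + 1 = 0" using char2_of_card[of m] card q_def m_pos by simp
  have qq: "(x ^ q) ^ q = x" for x :: 'a
    using fin_field_pow_card[of x] card by (simp add: power_mult[symmetric] power2_eq_square)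
  have q0: "q > 0" using q_def by simp
  define T where "T = trace2 q \<delta>"
  have T': "T = \<delta> + \<delta> ^ q" unfolding T_def trace2_def ..
  define A where "A = b * T ^ (2 ^ i)"
  define C where "C = T ^ 2"
  define D where "D = 1 / A"
  define N where "N = \<delta> * \<delta> ^ q"
  define e where "e = 2 * q + 2 ^ i + 2"
  define P where "P = (\<lambda>x::'a. b * (x ^ q + x + \<delta>) ^ e + x)"
  have Kadd: "(x + y) ^ q = x ^ q + y ^ q" for x y :: 'a unfolding q_def by (rule c2_pow2_add[OF c2])
  have Tq: "T ^ q = T" unfolding T' Kadd qq by (simp add: add.commute)
  have Tnz: "T \<noteq> 0"
  proof
    assume "T = 0"
    then have "\<delta> ^ q = - \<delta>" unfolding T' by (simp add: add_eq_0_iff)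
    then show False using delta_notin c2_minus[OF c2, of \<delta>] by simp
  qed
  have Aq: "A ^ q = A" unfolding A_def using b_Fq Tq by (simp add: K_mult K_pow)
  have Anz: "A \<noteq> 0" unfolding A_def using b_nz Tnz by simp
  have AD: "A * D = 1" unfolding D_def using Anz by simp
  have Dq: "D ^ q = D" unfolding D_def using Aq by (simp add: power_one_over)
  have Cq: "C ^ q = C" unfolding C_def using Tq by (simp add: K_pow)
  have TrP': "(b * (s + \<delta>) ^ e) ^ q + b * (s + \<delta>) ^ e = A * (s ^ 4 + C * s ^ 2 + N ^ 2)" if "s ^ q = s" for s
    using TrP[OF c2 card q_def b_Fq that, of \<delta> i] unfolding e_def A_def C_def N_def T' by (simp add: algebra_simps)
  define Lp where "Lp = (\<lambda>t::'a. A * t ^ 4 + A * C * t ^ 2 + t)"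
  have Lp_add: "Lp (x + y) = Lp x + Lp y" for x y
  proof -
    have "(x + y) ^ 4 = x ^ 4 + y ^ 4" using c2_pow2_add[OF c2, of x y 2] by simp
    then show ?thesis unfolding Lp_def using c2_sq_add[OF c2, of x y] by (simp add: algebra_simps)
  qed
  have Linj0: "s = 0" if sq: "s ^ q = s" and L0: "Lp s = 0" for s
  proof -
    define w where "w = b * (s + \<delta>) ^ e + b * \<delta> ^ e"
    have s1: "A * s ^ 4 + A * C * s ^ 2 = s"
    proof -
      have "A * s ^ 4 + A * C * s ^ 2 = - s" using L0 unfolding Lp_def by (simp add: eq_neg_iff_add_eq_0)
      then show ?thesis using c2_minus[OF c2] by simp
    qed
    have t0: "(b * (0 + \<delta>) ^ e) ^ q + b * (0 + \<delta>) ^ e = A * (0 ^ 4 + C * 0 ^ 2 + N ^ 2)"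
      by (rule TrP') (simp add: q0)
    have "w ^ q + w = ((b * (s + \<delta>) ^ e) ^ q + b * (s + \<delta>) ^ e) + ((b * (0 + \<delta>) ^ e) ^ q + b * (0 + \<delta>) ^ e)"
      unfolding w_def Kadd by (simp add: algebra_simps)
    also have "\<dots> = A * (s ^ 4 + C * s ^ 2 + N ^ 2) + A * (0 ^ 4 + C * 0 ^ 2 + N ^ 2)"
      unfolding TrP'[OF sq] t0 ..
    also have "\<dots> = (A * s ^ 4 + A * C * s ^ 2) + (A * N ^ 2 + A * N ^ 2)" by (simp add: algebra_simps)
    also have "\<dots> = s" unfolding s1 c2_add_self[OF c2] by simp
    finally have wt: "w ^ q + w = s" .
    have "P w = b * (s + \<delta>) ^ e + w" unfolding P_def wt ..
    also have "\<dots> = (b * (s + \<delta>) ^ e + b * (s + \<delta>) ^ e) + b * \<delta> ^ e" unfolding w_def by (simp add: algebra_simps)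
    also have "\<dots> = P 0" unfolding P_def c2_add_self[OF c2] using q0 by (simp add: zero_power)
    finally have "P w = P 0" .
    moreover have "inj P" using perm unfolding P_def e_def by (simp add: bij_is_inj)
    ultimately have "w = 0" by (simp add: inj_eq)
    then show "s = 0" using wt q0 by (simp add: zero_power)
  qed
  have Linj: "s = t" if "s ^ q = s" "t ^ q = t" "Lp s = Lp t" for s t
  proof -
    have "Lp (s + t) = 0" unfolding Lp_add using that(3) c2_add_self[OF c2] by simp
    moreover have "(s + t) ^ q = s + t" unfolding Kadd using that by simp
    ultimately have "s + t = 0" using Linj0 by blast
    then show ?thesis using c2_minus[OF c2, of t] by (simp add: add_eq_0_iff)
  qed
  define R where "R = (\<lambda>u::'a. \<Sum>k<m. (bb m C D k + aa A C D k) * u ^ (2 ^ k))"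
  have Cm: "C ^ (2^m) = C" and Dm: "D ^ (2^m) = D" and Am: "A ^ (2^m) = A"
    using Cq Dq Aq q_def by simp_all
  have RK: "R u ^ q = R u" if "u ^ q = u" for u
  proof -
    have um: "u ^ (2^m) = u" using that q_def by simp
    have "R u ^ (2^m) = R u" unfolding R_def
    proof (rule K_sum[OF c2])
      fix k
      have "bb m C D k ^ (2^m) = bb m C D k" unfolding bb_def
        by (intro K_mult K_pow Dm K_Sseq[OF c2 Cm Dm])
      moreover have "aa A C D k ^ (2^m) = aa A C D k" unfolding aa_def
        by (intro K_mult K_pow Am K_Sseq[OF c2 Cm Dm])
      moreover have "(u ^ (2^k)) ^ (2^m) = u ^ (2^k)" by (rule K_pow[OF um])
      ultimately show "((bb m C D k + aa A C D k) * u ^ (2 ^ k)) ^ (2^m) = (bb m C D k + aa A C D k) * u ^ (2 ^ k)"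
        by (simp add: K_add[OF c2] K_mult)
    qed
    then show ?thesis using q_def by simp
  qed
  have LpA: "Lp v = A * (v ^ 4 + C * v ^ 2 + D * v)" for v
    unfolding Lp_def using AD by (simp add: algebra_simps)
  have key: "Lp (R u) = u" if uK: "u ^ q = u" for u
  proof (cases "m = 1")
    case True
    have q2: "q = 2" using True q_def by simp
    have u2: "u ^ 2 = u" using uK q2 by simp
    have u4: "u ^ 4 = u" using u2 by (metis power2_eq_square power_mult numeral_Bit0 mult_2 power_add)
    have A1: "A = 1"
    proof -
      have "A * A = A * 1" using Aq q2 by (simp add: power2_eq_square)
      then show ?thesis using Anz by simp
    qed
    have Ru: "R u = u" unfolding R_def True by (simp add: bb_def aa_def)
    have C1: "C = 1"
    proof -
      have CC: "C * C = C" using Cq q2 by (simp add: power2_eq_square)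
      have "C \<noteq> 0"
      proof
        assume "C = 0"
        then have "Lp 1 = 0" unfolding Lp_def A1 using c2 by simp
        then have "(1::'a) = 0" by (rule Linj0[rotated]) simp
        then show False by simp
      qed
      then show ?thesis using CC by (metis mult_cancel_left mult_1_right)
    qed
    have "Lp u = (u + u) + u" unfolding Lp_def A1 C1 u2 u4 by simp
    then show ?thesis unfolding Ru c2_add_self[OF c2] by simp
  next
    case False
    then have m2: "m \<ge> 2" using m_pos by simp
    have um: "u ^ (2^m) = u" using uK q_def by simp
    define tr where "tr = Sseq C D (Suc m) + D * Sseq C D (m - 1) ^ 2"
    have tr2: "tr ^ 2 = tr" unfolding tr_def using m2 Anz AD
      by (intro trace_idem[OF c2 Cm Dm]) auto
    have trnz: "tr \<noteq> 0"
    proof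
      assume tr0: "tr = 0"
      have Dnz: "D \<noteq> 0" using AD by auto
      show False
      proof (cases "Sseq C D m = 0")
        case False
        have zR: "R v = 0" if vK: "v ^ q = v" for v
        proof -
          have vm: "v ^ (2^m) = v" using vK q_def by simp
          have "Lp (R v) = A * (D * tr * v)" unfolding LpA R_def tr_def
            using LR_main[OF c2 m2 Cm Dm AD Am vm] by simp
          then have "Lp (R v) = 0" using tr0 by simp
          then show ?thesis using Linj0 RK[OF vK] by blast
        qed
        have cj: "bb m C D (m - 1) + aa A C D (m - 1) \<noteq> 0"
          using False Anz m2 by (simp add: bb_def aa_def zero_power)
        obtain x where x: "(\<Sum>k<m. (bb m C D k + aa A C D k) * (x ^ (2^m) + x) ^ (2^k)) \<noteq> 0"
          using NV[OF c2, where m=m and j="m-1" and c="\<lambda>k. bb m C D k + aa A C D k"] card q_def m_pos cj by auto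
        have xK: "(x ^ q + x) ^ q = x ^ q + x" unfolding Kadd qq by (simp add: add.commute)
        have "R (x ^ q + x) = 0" by (rule zR[OF xK])
        then show False using x q_def unfolding R_def by simp
      next
        case True
        have det: "Sseq C D (Suc m) * (D * Sseq C D (m - 1) ^ 2) = 1"
          using det_one[OF c2 Dm Dnz, of C] m2 True by simp
        have "Sseq C D (Suc m) = - (D * Sseq C D (m - 1) ^ 2)" using tr0 unfolding tr_def by (simp add: eq_neg_iff_add_eq_0)
        then have eq: "Sseq C D (Suc m) = D * Sseq C D (m - 1) ^ 2" using c2_minus[OF c2] by simp
        have "(Sseq C D (Suc m) + 1) ^ 2 = 0"
          unfolding c2_sq_add[OF c2] using det eq c2 by (simp add: power2_eq_square)
        then have "Sseq C D (Suc m) + 1 = 0" by simp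
        then have "Sseq C D (Suc m) = - 1" by (simp add: eq_neg_iff_add_eq_0)
        then have S1: "Sseq C D (Suc m) = 1" using c2_minus[OF c2, of 1] by simp
        define R2 where "R2 = (\<lambda>u::'a. \<Sum>k<m. aa A C D k * u ^ (2 ^ k))"
        have zR: "R2 v = 0" if vK: "v ^ q = v" for v
        proof -
          have vm: "v ^ (2^m) = v" using vK q_def by simp
          have "Lp (R2 v) = A * (D * (1 + 1) * v + D^2 * 0 ^ 4 * v ^ 2)" unfolding LpA R2_def
            using LA_main[OF c2 m2 AD Am vm, of C] S1 True by simp
          then have L0: "Lp (R2 v) = 0" using c2 by simp
          have "R2 v ^ (2^m) = R2 v" unfolding R2_def
          proof (rule K_sum[OF c2])
            fix k
            have "aa A C D k ^ (2^m) = aa A C D k" unfolding aa_def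
              by (intro K_mult K_pow Am K_Sseq[OF c2 Cm Dm])
            moreover have "(v ^ (2^k)) ^ (2^m) = v ^ (2^k)" by (rule K_pow[OF vm])
            ultimately show "(aa A C D k * v ^ (2 ^ k)) ^ (2^m) = aa A C D k * v ^ (2 ^ k)"
              by (simp add: K_mult)
          qed
          then have "R2 v ^ q = R2 v" using q_def by simp
          then show ?thesis using Linj0 L0 by blast
        qed
        have cj: "aa A C D 0 \<noteq> 0" by (simp add: aa_def)
        obtain x where x: "(\<Sum>k<m. aa A C D k * (x ^ (2^m) + x) ^ (2^k)) \<noteq> 0"
          using NV[OF c2, where m=m and j=0 and c="\<lambda>k. aa A C D k"] card q_def m_pos cj by auto
        have xK: "(x ^ q + x) ^ q = x ^ q + x" unfolding Kadd qq by (simp add: add.commute)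
        have "R2 (x ^ q + x) = 0" by (rule zR[OF xK])
        then show False using x q_def unfolding R2_def by simp
      qed
    qed
    have tr1: "tr = 1"
    proof -
      have "tr * tr = tr * 1" using tr2 by (simp add: power2_eq_square)
      then show ?thesis using trnz by simp
    qed
    have "Lp (R u) = A * (D * tr * u)" unfolding LpA R_def tr_def
      using LR_main[OF c2 m2 Cm Dm AD Am um] by simp
    then show ?thesis using tr1 AD by (simp add: mult.assoc[symmetric])
  qed
  define B where "B = A * \<delta> ^ (2 * q + 2)"
  have BN: "B = A * N ^ 2" unfolding B_def N_def
  proof -
    have "(\<delta> * \<delta> ^ q) ^ 2 = \<delta> ^ 2 * (\<delta> ^ q) ^ 2" by (rule power_mult_distrib)
    also have "(\<delta> ^ q) ^ 2 = \<delta> ^ (2 * q)" by (simp only: power_mult[symmetric] mult.commute)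
    also have "\<delta> ^ 2 * \<delta> ^ (2 * q) = \<delta> ^ (2 * q + 2)" by (simp only: power_add[symmetric] add.commute)
    finally show "A * \<delta> ^ (2 * q + 2) = A * (\<delta> * \<delta> ^ q) ^ 2" by simp
  qed
  define Pinv where "Pinv = (\<lambda>x::'a. x + b * (\<delta> + R (x ^ q + x + B)) ^ e)"
  have inv1: "Pinv (P x) = x" for x
  proof -
    define t where "t = x ^ q + x"
    have tK: "t ^ q = t" unfolding t_def Kadd qq by (simp add: add.commute)
    have Px: "P x = b * (t + \<delta>) ^ e + x" unfolding P_def t_def ..
    have "P x ^ q + P x + B = ((b * (t + \<delta>) ^ e) ^ q + b * (t + \<delta>) ^ e) + t + B"
      unfolding Px Kadd t_def by (simp add: algebra_simps)
    also have "\<dots> = (A * t ^ 4 + A * C * t ^ 2 + t) + (A * N ^ 2 + A * N ^ 2)"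
      unfolding TrP'[OF tK] BN by (simp add: algebra_simps)
    also have "\<dots> = Lp t" unfolding c2_add_self[OF c2] Lp_def by simp
    finally have u: "P x ^ q + P x + B = Lp t" .
    have LtK: "Lp t ^ q = Lp t"
    proof -
      have "Lp t ^ q = A ^ q * (t ^ q) ^ 4 + A ^ q * C ^ q * (t ^ q) ^ 2 + t ^ q"
        unfolding Lp_def Kadd power_mult_distrib by (simp add: power_mult[symmetric] mult.commute)
      then show ?thesis unfolding Aq Cq tK Lp_def .
    qed
    have "R (Lp t) = t" using Linj[OF RK[OF LtK] tK] key[OF LtK] by simp
    then have "Pinv (P x) = P x + b * (\<delta> + t) ^ e" unfolding Pinv_def u by simp
    also have "\<dots> = (b * (t + \<delta>) ^ e + b * (t + \<delta>) ^ e) + x" unfolding Px by (simp add: algebra_simps)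
    also have "\<dots> = x" unfolding c2_add_self[OF c2] by simp
    finally show ?thesis .
  qed
  have inv2: "P (Pinv c) = c" for c
  proof -
    have "surj P" using perm unfolding P_def e_def by (rule bij_is_surj)
    then obtain y where "c = P y" by (metis surjD)
    then show ?thesis using inv1 by simp
  qed
  have sum_eq: "(\<Sum>k = 0..m - 1. (D ^ (2 ^ k) * (S C D (int m - 2 - int k)) ^ (2 ^ (k + 1))
                    + D powi (1 - 2 ^ k) * S C D (int k)) * u ^ (2 ^ k)) = R u" for u
  proof -
    have I: "{0..m - 1} = {..<m}" using m_pos by auto
    show ?thesis unfolding I R_def
    proof (rule sum.cong)
      fix k assume "k \<in> {..<m}"
      then have k: "k < m" by simp
      have f1: "S C D (int m - 2 - int k) = Sseq C D (m - 1 - k)" unfolding S_def nat_idx[OF k] ..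
      have "int k + 1 = int (Suc k)" by simp
      then have f2: "S C D (int k) = Sseq C D (Suc k)" unfolding S_def by (simp only: nat_int)
      have f3: "D powi (1 - 2 ^ k) = A ^ (2^k - 1)" unfolding D_def by (rule powi_idx)
      show "(D ^ (2 ^ k) * (S C D (int m - 2 - int k)) ^ (2 ^ (k + 1))
                    + D powi (1 - 2 ^ k) * S C D (int k)) * u ^ (2 ^ k) = (bb m C D k + aa A C D k) * u ^ (2 ^ k)"
        unfolding aa_def bb_def f1 f2 f3 ..
    qed simp
  qed
  have final: "\<forall>c. P (Pinv c) = c \<and> Pinv (P c) = c" using inv1 inv2 by blast
  show ?thesis
    unfolding Let_def T_def[symmetric] A_def[symmetric] C_def[symmetric] D_def[symmetric] sum_eq
      B_def[symmetric] e_def[symmetric]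
    using final unfolding Pinv_def P_def .
qed

end
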